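(* The LoRA-Null residual weight is in general not a solution of either of the following two problems. Precisely: there exist dimensions $n, m, N$ with $N \ge m$, a matrix $\mathbf{W}_0 \in \mathbb{R}^{n\times m}$ of rank $R$, a matrix $\mathbf{X}_{\text{pre}} \in \mathbb{R}^{m \times N}$, and an integer $1 \le r < R$ with $r<\min(n,m)$, such that the LoRA-Null residual $\mathbf{W}_0' = \mathbf{W}_0 - \mathbf{B}\mathbf{A}$ (defined below) is neither a solution of $$\text{(P1)}\quad \min_{\mathbf{W}'} \|\mathbf{W}' - \mathbf{W}_0\|_{\mathrm F} \ \text{ s.t. } \operatorname{rank}(\mathbf{W}') = R - r,$$ nor a solution of $$\text{(P2)}\quad \min_{\mathbf{W}'} \|\mathbf{W}'\mathbf{X}_{\text{pre}} - \mathbf{W}_0\mathbf{X}_{\text{pre}}\|_{\mathrm F} \ \text{ s.t. } \operatorname{rank}(\mathbf{W}') = R - r,$$ where both minimizations range over $\mathbf{W}' \in \mathbb{R}^{n\times m}$.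
   Context: LoRA-Null construction: given $\mathbf{W}_0 \in \mathbb{R}^{n\times m}$, $\mathbf{X}_{\text{pre}} \in \mathbb{R}^{m\times N}$ and a rank $r$, take an SVD $\mathbf{X}_{\text{pre}} = \mathbf{U}\mathbf{\Sigma}\mathbf{V}^\top$ with $\mathbf{U} \in \mathbb{R}^{m\times m}$ orthogonal and singular values in non-increasing order, and let $\mathbf{U}_{\text{null}} = \mathbf{U}_{[:,-r:]} \in \mathbb{R}^{m\times r}$ be the last $r$ columns of $\mathbf{U}$ (left singular vectors of the $r$ smallest singular values). Take an SVD $\mathbf{W}_0\mathbf{U}_{\text{null}}\mathbf{U}_{\text{null}}^\top = \mathbf{U}'\mathbf{\Sigma}'\mathbf{V}'^\top$ with singular values in non-increasing order and set $\mathbf{B} = \mathbf{U}'_{[:,:r]}\sqrt{\mathbf{\Sigma}'_{[:r]}}$, $\mathbf{A} = \sqrt{\mathbf{\Sigma}'_{[:r]}}\,\mathbf{V}'^\top_{[:r,:]}$. The LoRA-Null residual weight is $\mathbf{W}_0' = \mathbf{W}_0 - \mathbf{B}\mathbf{A}$ (which equals $\mathbf{W}_0 - \mathbf{W}_0\mathbf{U}_{\text{null}}\mathbf{U}_{\text{null}}^\top$). Notation: $\mathbf{M}_{[:,:k]}$, $\mathbf{M}_{[:,-k:]}$ are the first/last $k$ columns, $\mathbf{M}_{[:k,:]}$ the first $k$ rows, $\mathbf{\Sigma}_{[:k]}$ the leading $k\times k$ diagonal block; $\|\cdot\|_{\mathrm F}$ is the Frobenius norm. *)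

theory Defs
  imports "Jordan_Normal_Form.DL_Rank"
begin

definition mat_rank :: "real mat \<Rightarrow> nat" where
  "mat_rank A = vec_space.rank (dim_row A) A"

definition fro_norm :: "real mat \<Rightarrow> real" where
  "fro_norm A = sqrt (\<Sum>i<dim_row A. \<Sum>j<dim_col A. (A $$ (i,j))\<^sup>2)"

definition orth_mat :: "nat \<Rightarrow> real mat \<Rightarrow> bool" where
  "orth_mat k U \<longleftrightarrow> U \<in> carrier_mat k k \<and> transpose_mat U * U = 1\<^sub>m k"

definition is_svd :: "real mat \<Rightarrow> real mat \<Rightarrow> real mat \<Rightarrow> real mat \<Rightarrow> bool" where
  "is_svd M U S V \<longleftrightarrow>
     orth_mat (dim_row M) U \<and> orth_mat (dim_col M) V \<and>
     S \<in> carrier_mat (dim_row M) (dim_col M) \<and> diagonal_mat S \<and>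
     (\<forall>i < min (dim_row M) (dim_col M). 0 \<le> S $$ (i,i)) \<and>
     (\<forall>i j. i \<le> j \<longrightarrow> j < min (dim_row M) (dim_col M) \<longrightarrow> S $$ (j,j) \<le> S $$ (i,i)) \<and>
     M = U * S * transpose_mat V"

definition first_cols :: "nat \<Rightarrow> real mat \<Rightarrow> real mat" where
  "first_cols k M = mat (dim_row M) k (\<lambda>(i,j). M $$ (i,j))"

definition last_cols :: "nat \<Rightarrow> real mat \<Rightarrow> real mat" where
  "last_cols k M = mat (dim_row M) k (\<lambda>(i,j). M $$ (i, dim_col M - k + j))"

definition first_rows :: "nat \<Rightarrow> real mat \<Rightarrow> real mat" where
  "first_rows k M = mat k (dim_col M) (\<lambda>(i,j). M $$ (i,j))"

definition sqrt_lead_diag :: "nat \<Rightarrow> real mat \<Rightarrow> real mat" where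
  "sqrt_lead_diag k S = mat k k (\<lambda>(i,j). if i = j then sqrt (S $$ (i,i)) else 0)"

(* W0' is a LoRA-Null residual weight of W0 (n x m) for X_pre (m x N) and rank r,
   for some admissible choice of the two SVDs in the construction. *)
definition lora_null_residual :: "real mat \<Rightarrow> real mat \<Rightarrow> nat \<Rightarrow> real mat \<Rightarrow> bool" where
  "lora_null_residual W0 X r W0' \<longleftrightarrow>
     (\<exists>U S V U' S' V'.
        is_svd X U S V \<and>
        (let Unull = last_cols r U;
             P = W0 * Unull * transpose_mat Unull in
         is_svd P U' S' V' \<and>
         (let B = first_cols r U' * sqrt_lead_diag r S';
              A = sqrt_lead_diag r S' * first_rows r (transpose_mat V') in
          W0' = W0 - B * A)))"

definition solves_P1 :: "real mat \<Rightarrow> nat \<Rightarrow> real mat \<Rightarrow> bool" where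
  "solves_P1 W0 k W' \<longleftrightarrow>
     W' \<in> carrier_mat (dim_row W0) (dim_col W0) \<and> mat_rank W' = k \<and>
     (\<forall>W''\<in>carrier_mat (dim_row W0) (dim_col W0). mat_rank W'' = k \<longrightarrow>
        fro_norm (W' - W0) \<le> fro_norm (W'' - W0))"

definition solves_P2 :: "real mat \<Rightarrow> real mat \<Rightarrow> nat \<Rightarrow> real mat \<Rightarrow> bool" where
  "solves_P2 W0 X k W' \<longleftrightarrow>
     W' \<in> carrier_mat (dim_row W0) (dim_col W0) \<and> mat_rank W' = k \<and>
     (\<forall>W''\<in>carrier_mat (dim_row W0) (dim_col W0). mat_rank W'' = k \<longrightarrow>
        fro_norm (W' * X - W0 * X) \<le> fro_norm (W'' * X - W0 * X))"

end

theory Submission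
  imports Defs
begin

lemma diag_mult_left:
  fixes A B :: "real mat"
  assumes A: "A \<in> carrier_mat n n" and dA: "diagonal_mat A" and B: "B \<in> carrier_mat n m"
    and i: "i < n" and k: "k < m"
  shows "(A * B) $$ (i,k) = A $$ (i,i) * B $$ (i,k)"
proof -
  have "(A * B) $$ (i,k) = (\<Sum>j<n. A $$ (i,j) * B $$ (j,k))"
    using A B i k by (simp add: scalar_prod_def lessThan_atLeast0)
  also have "\<dots> = (\<Sum>j<n. if j = i then A $$ (i,i) * B $$ (i,k) else 0)"
    by (rule sum.cong) (use dA A i in \<open>auto simp: diagonal_mat_def\<close>)
  also have "\<dots> = A $$ (i,i) * B $$ (i,k)" using i by simp
  finally show ?thesis .
qed

lemma diag_mult_right:
  fixes A B :: "real mat"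
  assumes A: "A \<in> carrier_mat m m" and dA: "diagonal_mat A" and B: "B \<in> carrier_mat n m"
    and i: "i < n" and k: "k < m"
  shows "(B * A) $$ (i,k) = B $$ (i,k) * A $$ (k,k)"
proof -
  have "(B * A) $$ (i,k) = (\<Sum>j<m. B $$ (i,j) * A $$ (j,k))"
    using A B i k by (simp add: scalar_prod_def lessThan_atLeast0)
  also have "\<dots> = (\<Sum>j<m. if j = k then B $$ (i,k) * A $$ (k,k) else 0)"
    by (rule sum.cong) (use dA A k in \<open>auto simp: diagonal_mat_def\<close>)
  also have "\<dots> = B $$ (i,k) * A $$ (k,k)" using k by simp
  finally show ?thesis .
qed

lemma diag_transpose: "diagonal_mat A \<Longrightarrow> diagonal_mat (transpose_mat A)"
  by (auto simp: diagonal_mat_def)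

definition dX :: "nat \<Rightarrow> real" where "dX i = (if i = 0 then 2 else if i = 1 then 1 else 0)"
definition Xex :: "real mat" where "Xex = mat 3 3 (\<lambda>(i,j). if i = j then dX i else 0)"
definition Wex :: "real mat" where "Wex = mat 2 3 (\<lambda>(i,j). if i = j then 1 else 0)"

lemma Xex_carrier: "Xex \<in> carrier_mat 3 3" by (simp add: Xex_def)
lemma Xex_diag: "diagonal_mat Xex" by (auto simp: Xex_def diagonal_mat_def)
lemma Xex_entry: "i < 3 \<Longrightarrow> Xex $$ (i,i) = dX i" by (simp add: Xex_def)
lemma Wex_carrier: "Wex \<in> carrier_mat 2 3" by (simp add: Wex_def)

lemma svd_X_lastcol:
  assumes "is_svd Xex U S V"
  shows "U $$ (0,2) = 0 \<and> U $$ (1,2) = 0"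
proof -
  have dims: "dim_row Xex = 3" "dim_col Xex = 3" by (auto simp: Xex_def)
  from assms have U: "U \<in> carrier_mat 3 3" and UU: "transpose_mat U * U = 1\<^sub>m 3"
    and V: "V \<in> carrier_mat 3 3" and VV: "transpose_mat V * V = 1\<^sub>m 3"
    and S: "S \<in> carrier_mat 3 3" and dS: "diagonal_mat S"
    and nn: "\<forall>i<3. 0 \<le> S $$ (i,i)"
    and mono: "\<forall>i j. i \<le> j \<longrightarrow> j < 3 \<longrightarrow> S $$ (j,j) \<le> S $$ (i,i)"
    and eq: "Xex = U * S * transpose_mat V"
    by (auto simp: is_svd_def orth_mat_def dims)
  have UUt: "U * transpose_mat U = 1\<^sub>m 3"
    using mat_mult_left_right_inverse[OF _ U UU] U by simp
  have Ut: "transpose_mat U \<in> carrier_mat 3 3" "transpose_mat V \<in> carrier_mat 3 3"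
    "transpose_mat S \<in> carrier_mat 3 3" using U V S by auto
  have XV: "Xex * V = U * S"
  proof -
    have "Xex * V = U * S * (transpose_mat V * V)"
      unfolding eq using U S V Ut by (simp add: assoc_mult_mat[of _ 3 3 _ 3 _ 3])
    also have "\<dots> = U * S" using U S VV by simp
    finally show ?thesis .
  qed
  have XtU: "transpose_mat Xex * U = V * transpose_mat S"
  proof -
    have "transpose_mat Xex = V * transpose_mat S * transpose_mat U"
      unfolding eq using U S V Ut
      by (simp add: transpose_mult[of _ 3 3 _ 3] assoc_mult_mat[of _ 3 3 _ 3 _ 3])
    hence "transpose_mat Xex * U = V * transpose_mat S * (transpose_mat U * U)"
      using U S V Ut by (simp add: assoc_mult_mat[of _ 3 3 _ 3 _ 3])
    also have "\<dots> = V * transpose_mat S" using V Ut UU by simp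
    finally show ?thesis .
  qed
  have XtX: "transpose_mat Xex = Xex" by (auto simp: Xex_def)
  have key: "Xex * (Xex * U) = U * (S * transpose_mat S)"
  proof -
    have "Xex * (Xex * U) = Xex * (V * transpose_mat S)" using XtU XtX by simp
    also have "\<dots> = (Xex * V) * transpose_mat S"
      using V Ut Xex_carrier by (simp add: assoc_mult_mat[of _ 3 3 _ 3 _ 3])
    also have "\<dots> = U * (S * transpose_mat S)"
      unfolding XV using U S Ut by (simp add: assoc_mult_mat[of _ 3 3 _ 3 _ 3])
    finally show ?thesis .
  qed
  have ent: "dX i * (dX i * U $$ (i,k)) = U $$ (i,k) * (S $$ (k,k) * S $$ (k,k))"
    if i: "i < 3" and k: "k < 3" for i k
  proof -
    have XU: "Xex * U \<in> carrier_mat 3 3" using U Xex_carrier by simp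
    have SSt: "S * transpose_mat S \<in> carrier_mat 3 3" using S by simp
    have "(Xex * (Xex * U)) $$ (i,k) = dX i * (dX i * U $$ (i,k))"
      using diag_mult_left[OF Xex_carrier Xex_diag XU i k]
        diag_mult_left[OF Xex_carrier Xex_diag U i k] Xex_entry[OF i] by simp
    moreover have "(S * transpose_mat S) $$ (k,k) = S $$ (k,k) * S $$ (k,k)"
      using diag_mult_left[OF S dS Ut(3) k k] S k by simp
    moreover have "(U * (S * transpose_mat S)) $$ (i,k) = U $$ (i,k) * (S * transpose_mat S) $$ (k,k)"
    proof -
      have "diagonal_mat (S * transpose_mat S)"
        unfolding diagonal_mat_def
      proof (intro allI impI)
        fix a b assume "a < dim_row (S * transpose_mat S)" "b < dim_col (S * transpose_mat S)" "a \<noteq> b"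
        thus "(S * transpose_mat S) $$ (a,b) = 0"
          using diag_mult_left[OF S dS Ut(3), of a b] S dS by (simp add: diagonal_mat_def)
      qed
      thus ?thesis using diag_mult_right[OF SSt _ U i k] by simp
    qed
    ultimately show ?thesis using key by (simp only:)
  qed
  show ?thesis
  proof (cases "S $$ (2,2) = 0")
    case True
    from ent[of 0 2] ent[of 1 2] True show ?thesis by (simp add: dX_def)
  next
    case False
    hence pos: "S $$ (k,k) > 0" if "k < 3" for k
      proof -
      have "k \<le> 2" using that by simp
      hence "S $$ (2,2) \<le> S $$ (k,k)" using mono by simp
      moreover have "0 \<le> S $$ (2,2)" using nn by simp
      ultimately show ?thesis using False by linarith
    qed
    have z: "U $$ (2,k) = 0" if "k < 3" for k
      using ent[of 2 k] pos[OF that] that by (simp add: dX_def)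
    have "(U * transpose_mat U) $$ (2,2) = (\<Sum>k<3. U $$ (2,k) * U $$ (2,k))"
      using U by (simp add: scalar_prod_def lessThan_atLeast0)
    also have "\<dots> = 0" using z by simp
    finally show ?thesis using UUt by simp
  qed
qed


lemma P_zero:
  assumes U: "U \<in> carrier_mat 3 3" and u: "U $$ (0,2) = 0" "U $$ (1,2) = 0"
  shows "Wex * last_cols 1 U * transpose_mat (last_cols 1 U) = 0\<^sub>m 2 3"
proof -
  have L: "last_cols 1 U \<in> carrier_mat 3 1" using U by (simp add: last_cols_def)
  have "Wex * last_cols 1 U = 0\<^sub>m 2 1"
  proof (rule eq_matI)
    fix i j assume "i < dim_row (0\<^sub>m 2 1 :: real mat)" "j < dim_col (0\<^sub>m 2 1 :: real mat)"
    hence i: "i < 2" and j: "j = 0" by auto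
    have "(Wex * last_cols 1 U) $$ (i,j) = 0"
      using U i j u by (auto simp add: scalar_prod_def last_cols_def Wex_def numeral_3_eq_3 numeral_2_eq_2 atLeast0_lessThan_Suc less_2_cases_iff)
    thus "(Wex * last_cols 1 U) $$ (i,j) = 0\<^sub>m 2 1 $$ (i,j)" using i j by simp
  qed (use L Wex_carrier in auto)
  thus ?thesis using L by simp
qed

lemma svd_zero:
  assumes "is_svd (0\<^sub>m 2 3) U' S' V'"
  shows "S' = 0\<^sub>m 2 3"
proof -
  from assms have U: "U' \<in> carrier_mat 2 2" and UU: "transpose_mat U' * U' = 1\<^sub>m 2"
    and V: "V' \<in> carrier_mat 3 3" and VV: "transpose_mat V' * V' = 1\<^sub>m 3"
    and S: "S' \<in> carrier_mat 2 3"
    and eq: "0\<^sub>m 2 3 = U' * S' * transpose_mat V'"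
    by (auto simp: is_svd_def orth_mat_def)
  have Ut: "transpose_mat U' \<in> carrier_mat 2 2" "transpose_mat V' \<in> carrier_mat 3 3" using U V by auto
  have "transpose_mat U' * (U' * S' * transpose_mat V') * V'
        = (transpose_mat U' * U') * S' * (transpose_mat V' * V')"
  proof -
    have a: "U' * S' * transpose_mat V' = U' * (S' * transpose_mat V')"
      by (rule assoc_mult_mat[OF U S Ut(2)])
    have b: "transpose_mat U' * (U' * (S' * transpose_mat V')) = (transpose_mat U' * U') * (S' * transpose_mat V')"
      by (rule assoc_mult_mat[OF Ut(1) U mult_carrier_mat[OF S Ut(2)], symmetric])
    have c: "(transpose_mat U' * U') * (S' * transpose_mat V') * V' = (transpose_mat U' * U') * S' * (transpose_mat V' * V')"
    proof -
      have X: "transpose_mat U' * U' \<in> carrier_mat 2 2" using Ut U by simp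
      have "(transpose_mat U' * U') * (S' * transpose_mat V') = (transpose_mat U' * U') * S' * transpose_mat V'"
        by (rule assoc_mult_mat[OF X S Ut(2), symmetric])
      moreover have "(transpose_mat U' * U') * S' * transpose_mat V' * V' = (transpose_mat U' * U') * S' * (transpose_mat V' * V')"
        by (rule assoc_mult_mat[OF mult_carrier_mat[OF X S] Ut(2) V])
      ultimately show ?thesis by simp
    qed
    show ?thesis using a b c by simp
  qed
  also have "\<dots> = S'" using UU VV S by simp
  finally have "S' = transpose_mat U' * (U' * S' * transpose_mat V') * V'" by simp
  also have "\<dots> = 0\<^sub>m 2 3" unfolding eq[symmetric] using Ut V by simp
  finally show ?thesis .
qed


lemma residual_eq:
  assumes "lora_null_residual Wex Xex 1 W0'"
  shows "W0' = Wex"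
proof -
  have dims: "dim_row Xex = 3" "dim_col Xex = 3" by (auto simp: Xex_def)
  from assms obtain U S V U' S' V' where sx: "is_svd Xex U S V"
    and sp: "is_svd (Wex * last_cols 1 U * transpose_mat (last_cols 1 U)) U' S' V'"
    and w: "W0' = Wex - first_cols 1 U' * sqrt_lead_diag 1 S' * (sqrt_lead_diag 1 S' * first_rows 1 (transpose_mat V'))"
    unfolding lora_null_residual_def Let_def by blast
  have U: "U \<in> carrier_mat 3 3" using sx dims by (auto simp: is_svd_def orth_mat_def)
  from svd_X_lastcol[OF sx] P_zero[OF U] sp have sp0: "is_svd (0\<^sub>m 2 3) U' S' V'" by simp
  hence S': "S' = 0\<^sub>m 2 3" by (rule svd_zero)
  have U': "U' \<in> carrier_mat 2 2" and V': "V' \<in> carrier_mat 3 3" using sp0 by (auto simp: is_svd_def orth_mat_def)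
  have sq: "sqrt_lead_diag 1 S' = 0\<^sub>m 1 1"
    unfolding S' by (rule eq_matI) (auto simp: sqrt_lead_diag_def)
  have fc: "first_cols 1 U' \<in> carrier_mat 2 1" using U' by (simp add: first_cols_def)
  have fr: "first_rows 1 (transpose_mat V') \<in> carrier_mat 1 3" using V' by (simp add: first_rows_def)
  have "first_cols 1 U' * sqrt_lead_diag 1 S' * (sqrt_lead_diag 1 S' * first_rows 1 (transpose_mat V')) = 0\<^sub>m 2 3"
    unfolding sq using fc fr by simp
  thus ?thesis unfolding w by (intro eq_matI) (auto simp: Wex_def)
qed

lemma rank_Wex: "mat_rank Wex \<ge> 2"
proof -
  interpret vs: vec_space "TYPE(real)" 2 .
  have I: "(1\<^sub>m 2 :: real mat) \<in> carrier_mat 2 2" by simp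
  have r: "vs.rank (1\<^sub>m 2 :: real mat) = 2" using vs.det_rank_iff[OF I] by simp
  have c0: "col (1\<^sub>m 2 :: real mat) 0 \<noteq> col (1\<^sub>m 2) 1"
  proof
    assume "col (1\<^sub>m 2 :: real mat) 0 = col (1\<^sub>m 2) 1"
    hence "col (1\<^sub>m 2 :: real mat) 0 $ 0 = col (1\<^sub>m 2) 1 $ 0" by simp
    thus False by simp
  qed
  have colsI: "cols (1\<^sub>m 2 :: real mat) = [col (1\<^sub>m 2) 0, col (1\<^sub>m 2) 1]"
    by (simp add: cols_def upt_conv_Cons)
  have d: "distinct (cols (1\<^sub>m 2 :: real mat))" using colsI c0 by simp
  have li: "vs.lin_indpt (set (cols (1\<^sub>m 2 :: real mat)))"
    using vs.full_rank_lin_indpt[OF I r d] .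
  have colsW: "cols Wex = [col Wex 0, col Wex 1, col Wex 2]"
    by (simp add: cols_def Wex_def upt_conv_Cons eval_nat_numeral)
  have e0: "col Wex 0 = col (1\<^sub>m 2) 0" and e1: "col Wex 1 = col (1\<^sub>m 2) 1"
    by (auto intro!: eq_vecI simp: Wex_def less_2_cases_iff)
  have sub: "set (cols (1\<^sub>m 2 :: real mat)) \<subseteq> set (cols Wex)"
    using colsI colsW e0 e1 by auto
  have "vs.rank Wex \<ge> card (set (cols (1\<^sub>m 2 :: real mat)))"
    by (rule vs.rank_ge_card_indpt[OF Wex_carrier sub li])
  moreover have "card (set (cols (1\<^sub>m 2 :: real mat))) = 2"
    using d colsI by (simp add: distinct_card)
  ultimately show ?thesis unfolding mat_rank_def using Wex_carrier by simp
qed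


lemma svd_Xex: "is_svd Xex (1\<^sub>m 3) Xex (1\<^sub>m 3)"
proof -
  have dims: "dim_row Xex = 3" "dim_col Xex = 3" by (auto simp: Xex_def)
  have mono: "dX j \<le> dX i" if "i \<le> j" "j < 3" for i j
    using that by (auto simp: dX_def)
  show ?thesis unfolding is_svd_def orth_mat_def dims
    using Xex_carrier Xex_diag mono by (auto simp: Xex_entry dX_def)
qed

theorem theorem3:
  shows "\<exists>(n::nat) (m::nat) (N::nat) (W0::real mat) (X::real mat) (r::nat).
           N \<ge> m \<and> W0 \<in> carrier_mat n m \<and> X \<in> carrier_mat m N \<and>
           1 \<le> r \<and> r < mat_rank W0 \<and> r < min n m \<and>
           (\<exists>W0'. lora_null_residual W0 X r W0') \<and>
           (\<forall>W0'. lora_null_residual W0 X r W0' \<longrightarrow>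
              \<not> solves_P1 W0 (mat_rank W0 - r) W0' \<and>
              \<not> solves_P2 W0 X (mat_rank W0 - r) W0')"
proof (rule exI[of _ 2], rule exI[of _ 3], rule exI[of _ 3], rule exI[of _ Wex], rule exI[of _ Xex],
    rule exI[of _ 1], intro conjI)
  show "(3::nat) \<ge> 3" by simp
  show "Wex \<in> carrier_mat 2 3" by (rule Wex_carrier)
  show "Xex \<in> carrier_mat 3 3" by (rule Xex_carrier)
  show "(1::nat) \<le> 1" by simp
  show "1 < mat_rank Wex" using rank_Wex by simp
  show "(1::nat) < min 2 3" by simp
  have P: "Wex * last_cols 1 (1\<^sub>m 3) * transpose_mat (last_cols 1 (1\<^sub>m 3)) = 0\<^sub>m 2 3"
    by (rule P_zero) auto
  have sp: "is_svd (0\<^sub>m 2 3) (1\<^sub>m 2) (0\<^sub>m 2 3) (1\<^sub>m 3)"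
    by (auto simp: is_svd_def orth_mat_def diagonal_mat_def)
  have "lora_null_residual Wex Xex 1 (Wex - first_cols 1 (1\<^sub>m 2) * sqrt_lead_diag 1 (0\<^sub>m 2 3) *
          (sqrt_lead_diag 1 (0\<^sub>m 2 3) * first_rows 1 (transpose_mat (1\<^sub>m 3))))"
    unfolding lora_null_residual_def Let_def
    apply (rule exI[of _ "1\<^sub>m 3"], rule exI[of _ Xex], rule exI[of _ "1\<^sub>m 3"])
    apply (rule exI[of _ "1\<^sub>m 2"], rule exI[of _ "0\<^sub>m 2 3"], rule exI[of _ "1\<^sub>m 3"])
    apply (subst P)
    using svd_Xex sp apply (intro conjI)
      apply assumption+
    apply (simp add: transpose_one)
    done
  thus "\<exists>W0'. lora_null_residual Wex Xex 1 W0'" by blast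
  show "\<forall>W0'. lora_null_residual Wex Xex 1 W0' \<longrightarrow>
              \<not> solves_P1 Wex (mat_rank Wex - 1) W0' \<and>
              \<not> solves_P2 Wex Xex (mat_rank Wex - 1) W0'"
  proof (intro allI impI)
    fix W0' assume "lora_null_residual Wex Xex 1 W0'"
    hence e: "W0' = Wex" by (rule residual_eq)
    have "mat_rank Wex \<noteq> mat_rank Wex - 1" using rank_Wex by simp
    thus "\<not> solves_P1 Wex (mat_rank Wex - 1) W0' \<and> \<not> solves_P2 Wex Xex (mat_rank Wex - 1) W0'"
      unfolding e solves_P1_def solves_P2_def by blast
  qed
qed

end
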